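(* Let $X_{\text{box}}=\prod_{i=1}^n [l_i,u_i]\subset\mathbb{R}^n$ with $l_i<u_i$ for all $i$, and let $\psi\in\mathcal{C}^3(\operatorname{int}(X_{\text{box}}))$ be convex. Suppose there exists $\beta>0$ such that for all $x\in\operatorname{int}(X_{\text{box}})$ and all $h\in\mathbb{R}^n$, $$\big|\nabla^3\psi(x)[h,h,h]\big|\le \beta\, h^T\nabla^2\psi(x)h\,\sqrt{\sum_{i=1}^n \Big(\frac{h_i^2}{(u_i-x_i)^2}+\frac{h_i^2}{(x_i-l_i)^2}\Big)}.$$ Then for every $t>0$ the function $\bar\psi_t(x)=\psi(x)-t\sum_{i=1}^n\log\big((u_i-x_i)(x_i-l_i)\big)$ is $2(1+\beta)/\sqrt{t}$-self-concordant on $\operatorname{int}(X_{\text{box}})$.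
   Context: For $M\ge 0$, a closed convex function $\phi$ with open convex domain $X_\phi\subseteq\mathbb{R}^n$ is called $M$-self-concordant if $\phi$ is three times continuously differentiable on $X_\phi$ and for all $x\in X_\phi$ and $h\in\mathbb{R}^n$, $\nabla^3\phi(x)[h,h,h]\le M\,(h^T\nabla^2\phi(x)h)^{3/2}$, where $\nabla^3\phi(x)[h_1,h_2,h_3]$ denotes the third differential of $\phi$ at $x$ along $h_1,h_2,h_3$. *)

theory Defs
  imports "HOL-Analysis.Analysis"
begin

definition D1 :: "('a::real_normed_vector \<Rightarrow> real) \<Rightarrow> 'a \<Rightarrow> 'a \<Rightarrow> real" where
  "D1 f x h = frechet_derivative f (at x) h"

definition D2 :: "('a::real_normed_vector \<Rightarrow> real) \<Rightarrow> 'a \<Rightarrow> 'a \<Rightarrow> 'a \<Rightarrow> real" where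
  "D2 f x h k = frechet_derivative (\<lambda>y. D1 f y h) (at x) k"

definition D3 :: "('a::real_normed_vector \<Rightarrow> real) \<Rightarrow> 'a \<Rightarrow> 'a \<Rightarrow> 'a \<Rightarrow> 'a \<Rightarrow> real" where
  "D3 f x h k l = frechet_derivative (\<lambda>y. D2 f y h k) (at x) l"

definition C3_on :: "'a::real_normed_vector set \<Rightarrow> ('a \<Rightarrow> real) \<Rightarrow> bool" where
  "C3_on S f \<longleftrightarrow>
     f differentiable_on S \<and>
     (\<forall>h. (\<lambda>y. D1 f y h) differentiable_on S) \<and>
     (\<forall>h k. (\<lambda>y. D2 f y h k) differentiable_on S) \<and>
     (\<forall>h k l. continuous_on S (\<lambda>y. D3 f y h k l))"

definition closed_convex_fun :: "'a::euclidean_space set \<Rightarrow> ('a \<Rightarrow> real) \<Rightarrow> bool" where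
  "closed_convex_fun X f \<longleftrightarrow> open X \<and> convex X \<and> convex_on X f \<and> closed (epigraph X f)"

definition self_concordant :: "real \<Rightarrow> 'a::euclidean_space set \<Rightarrow> ('a \<Rightarrow> real) \<Rightarrow> bool" where
  "self_concordant M X f \<longleftrightarrow> M \<ge> 0 \<and> closed_convex_fun X f \<and> C3_on X f \<and>
     (\<forall>x\<in>X. \<forall>h. D3 f x h h h \<le> M * (D2 f x h h) powr (3/2))"

end

theory Submission
  imports Defs "HOL-Analysis.Analysis"
begin


definition bp0 :: "real \<Rightarrow> real \<Rightarrow> real \<Rightarrow> real" where
  "bp0 a b s = ln ((b - s) * (s - a))"
definition bp1 :: "real \<Rightarrow> real \<Rightarrow> real \<Rightarrow> real" where
  "bp1 a b s = 1 / (s - a) - 1 / (b - s)"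
definition bp2 :: "real \<Rightarrow> real \<Rightarrow> real \<Rightarrow> real" where
  "bp2 a b s = - (1 / (s - a)^2) - 1 / (b - s)^2"
definition bp3 :: "real \<Rightarrow> real \<Rightarrow> real \<Rightarrow> real" where
  "bp3 a b s = 2 / (s - a)^3 - 2 / (b - s)^3"

lemma bp0_deriv: "a < s \<Longrightarrow> s < b \<Longrightarrow> (bp0 a b has_real_derivative bp1 a b s) (at s)"
  unfolding bp0_def[abs_def]
  apply (rule derivative_eq_intros refl | simp)+
  apply (simp add: bp1_def field_simps)
  done

lemma bp1_deriv: "a < s \<Longrightarrow> s < b \<Longrightarrow> (bp1 a b has_real_derivative bp2 a b s) (at s)"
  unfolding bp1_def[abs_def]
  apply (rule derivative_eq_intros refl | simp)+
  apply (simp add: bp2_def field_simps power2_eq_square)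
  done

lemma bp2_deriv: "a < s \<Longrightarrow> s < b \<Longrightarrow> (bp2 a b has_real_derivative bp3 a b s) (at s)"
  unfolding bp2_def[abs_def]
  apply (rule derivative_eq_intros refl | simp)+
  apply (simp add: bp3_def divide_simps)
  apply (simp add: algebra_simps power2_eq_square power3_eq_cube eval_nat_numeral)
  done

lemma sum_deriv:
  fixes x :: "real ^ 'n"
  assumes "\<And>i. (g i has_real_derivative g' i) (at (x $ i))"
  shows "((\<lambda>y. \<Sum>i\<in>UNIV. c i * g i (y $ i)) has_derivative (\<lambda>m. \<Sum>i\<in>UNIV. c i * g' i * m $ i)) (at x)"
proof -
  have "((\<lambda>y. c i * g i (y $ i)) has_derivative (\<lambda>m. c i * g' i * m $ i)) (at x)" for i
  proof -
    have "((\<lambda>y. g i (y $ i)) has_derivative (\<lambda>m. g' i * (m $ i))) (at x)"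
      using has_derivative_compose[OF bounded_linear_imp_has_derivative[OF bounded_linear_vec_nth[of i]]
          has_field_derivative_imp_has_derivative[OF assms[of i]]] by simp
    from has_derivative_mult_right[OF this, of "c i"] show ?thesis by (simp add: mult_ac)
  qed
  then show ?thesis by (intro has_derivative_sum) auto
qed



lemma box_coord: "(x::real^'n) \<in> box l u \<Longrightarrow> l $ i < x $ i \<and> x $ i < u $ i"
  by (simp add: mem_box_cart)

lemma derivs:
  fixes l u :: "real ^ 'n" and \<psi> :: "real ^ 'n \<Rightarrow> real" and t :: real
  assumes C3: "C3_on (box l u) \<psi>"
  defines "f \<equiv> (\<lambda>x. \<psi> x - t * (\<Sum>i\<in>UNIV. ln ((u $ i - x $ i) * (x $ i - l $ i))))"
  shows "C3_on (box l u) f"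
    and "\<And>x h k. x \<in> box l u \<Longrightarrow> D2 f x h k = D2 \<psi> x h k - t * (\<Sum>i\<in>UNIV. (h$i * k$i) * bp2 (l$i) (u$i) (x$i))"
    and "\<And>x h k m. x \<in> box l u \<Longrightarrow> D3 f x h k m = D3 \<psi> x h k m - t * (\<Sum>i\<in>UNIV. (h$i * k$i * m$i) * bp3 (l$i) (u$i) (x$i))"
proof -
  let ?S = "box l u"
  have opS: "open ?S" by (rule open_box)
  from C3 have d0: "\<psi> differentiable_on ?S" and d1: "\<And>h. (\<lambda>y. D1 \<psi> y h) differentiable_on ?S"
    and d2: "\<And>h k. (\<lambda>y. D2 \<psi> y h k) differentiable_on ?S"
    and c3: "\<And>h k m. continuous_on ?S (\<lambda>y. D3 \<psi> y h k m)"
    unfolding C3_on_def by auto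
  have f_eq: "f = (\<lambda>x. \<psi> x - t * (\<Sum>i\<in>UNIV. 1 * bp0 (l$i) (u$i) (x$i)))"
    by (simp add: f_def bp0_def)
  have Df1: "(f has_derivative (\<lambda>h. D1 \<psi> y h - t * (\<Sum>i\<in>UNIV. 1 * bp1 (l$i) (u$i) (y$i) * h$i))) (at y)"
    if y: "y \<in> ?S" for y
  proof -
    have "\<psi> differentiable at y" using d0 y opS differentiable_on_eq_differentiable_at by blast
    then have a: "(\<psi> has_derivative (\<lambda>h. D1 \<psi> y h)) (at y)"
      unfolding D1_def frechet_derivative_works by simp
    have b: "((\<lambda>x. \<Sum>i\<in>UNIV. 1 * bp0 (l$i) (u$i) (x$i)) has_derivative (\<lambda>h. \<Sum>i\<in>UNIV. 1 * bp1 (l$i) (u$i) (y$i) * h$i)) (at y)"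
      by (rule sum_deriv, rule bp0_deriv) (use box_coord[OF y] in auto)
    show ?thesis unfolding f_eq by (intro has_derivative_diff a has_derivative_mult_right b)
  qed
  have D1f: "D1 f y h = D1 \<psi> y h - t * (\<Sum>i\<in>UNIV. h$i * bp1 (l$i) (u$i) (y$i))" if y: "y \<in> ?S" for y h
    unfolding D1_def[of f] fun_cong[OF frechet_derivative_at[OF Df1[OF y]], of h, symmetric]
    by (simp add: mult.commute)
  have Df2: "((\<lambda>y. D1 f y h) has_derivative (\<lambda>k. D2 \<psi> x h k - t * (\<Sum>i\<in>UNIV. h$i * bp2 (l$i) (u$i) (x$i) * k$i))) (at x)"
    if x: "x \<in> ?S" for x h
  proof -
    have "(\<lambda>y. D1 \<psi> y h) differentiable at x" using d1 x opS differentiable_on_eq_differentiable_at by blast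
    then have a: "((\<lambda>y. D1 \<psi> y h) has_derivative (\<lambda>k. D2 \<psi> x h k)) (at x)"
      unfolding D2_def frechet_derivative_works by simp
    have b: "((\<lambda>x. \<Sum>i\<in>UNIV. h$i * bp1 (l$i) (u$i) (x$i)) has_derivative (\<lambda>k. \<Sum>i\<in>UNIV. h$i * bp2 (l$i) (u$i) (x$i) * k$i)) (at x)"
      by (rule sum_deriv, rule bp1_deriv) (use box_coord[OF x] in auto)
    have "((\<lambda>y. D1 \<psi> y h - t * (\<Sum>i\<in>UNIV. h$i * bp1 (l$i) (u$i) (y$i))) has_derivative (\<lambda>k. D2 \<psi> x h k - t * (\<Sum>i\<in>UNIV. h$i * bp2 (l$i) (u$i) (x$i) * k$i))) (at x)"
      by (intro has_derivative_diff a has_derivative_mult_right b)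
    then show ?thesis
      by (rule has_derivative_transform_within_open[OF _ opS x]) (simp add: D1f)
  qed
  have D2f: "D2 f x h k = D2 \<psi> x h k - t * (\<Sum>i\<in>UNIV. (h$i * k$i) * bp2 (l$i) (u$i) (x$i))" if x: "x \<in> ?S" for x h k
    unfolding D2_def[of f] fun_cong[OF frechet_derivative_at[OF Df2[OF x, of h]], of k, symmetric]
    by (simp add: mult_ac)
  have Df3: "((\<lambda>y. D2 f y h k) has_derivative (\<lambda>m. D3 \<psi> x h k m - t * (\<Sum>i\<in>UNIV. (h$i * k$i) * bp3 (l$i) (u$i) (x$i) * m$i))) (at x)"
    if x: "x \<in> ?S" for x h k
  proof -
    have "(\<lambda>y. D2 \<psi> y h k) differentiable at x" using d2 x opS differentiable_on_eq_differentiable_at by blast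
    then have a: "((\<lambda>y. D2 \<psi> y h k) has_derivative (\<lambda>m. D3 \<psi> x h k m)) (at x)"
      unfolding D3_def frechet_derivative_works by simp
    have b: "((\<lambda>x. \<Sum>i\<in>UNIV. (h$i * k$i) * bp2 (l$i) (u$i) (x$i)) has_derivative (\<lambda>m. \<Sum>i\<in>UNIV. (h$i * k$i) * bp3 (l$i) (u$i) (x$i) * m$i)) (at x)"
      by (rule sum_deriv, rule bp2_deriv) (use box_coord[OF x] in auto)
    have "((\<lambda>y. D2 \<psi> y h k - t * (\<Sum>i\<in>UNIV. (h$i * k$i) * bp2 (l$i) (u$i) (y$i))) has_derivative (\<lambda>m. D3 \<psi> x h k m - t * (\<Sum>i\<in>UNIV. (h$i * k$i) * bp3 (l$i) (u$i) (x$i) * m$i))) (at x)"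
      by (intro has_derivative_diff a has_derivative_mult_right b)
    then show ?thesis
      by (rule has_derivative_transform_within_open[OF _ opS x]) (simp add: D2f)
  qed
  show D3f: "D3 f x h k m = D3 \<psi> x h k m - t * (\<Sum>i\<in>UNIV. (h$i * k$i * m$i) * bp3 (l$i) (u$i) (x$i))" if x: "x \<in> ?S" for x h k m
    unfolding D3_def[of f] fun_cong[OF frechet_derivative_at[OF Df3[OF x, of h k]], of m, symmetric]
    by (simp add: mult_ac)
  show "D2 f x h k = D2 \<psi> x h k - t * (\<Sum>i\<in>UNIV. (h$i * k$i) * bp2 (l$i) (u$i) (x$i))" if x: "x \<in> ?S" for x h k
    using D2f[OF x] .
  have cont: "continuous_on ?S (\<lambda>y. D3 \<psi> y h k m - t * (\<Sum>i\<in>UNIV. (h$i * k$i * m$i) * bp3 (l$i) (u$i) (y$i)))" for h k m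
  proof -
    have "continuous_on ?S (\<lambda>y. bp3 (l$i) (u$i) (y$i))" for i
      unfolding bp3_def
      by (intro continuous_intros) (auto dest: box_coord[of _ l u i])
    then show ?thesis by (intro continuous_intros c3)
  qed
  show "C3_on ?S f"
    unfolding C3_on_def
  proof (intro conjI allI)
    show "f differentiable_on ?S" using Df1 by (auto simp: differentiable_on_eq_differentiable_at[OF opS] intro: differentiableI)
    show "(\<lambda>y. D1 f y h) differentiable_on ?S" for h using Df2 by (auto simp: differentiable_on_eq_differentiable_at[OF opS] intro: differentiableI)
    show "(\<lambda>y. D2 f y h k) differentiable_on ?S" for h k using Df3 by (auto simp: differentiable_on_eq_differentiable_at[OF opS] intro: differentiableI)
    show "continuous_on ?S (\<lambda>y. D3 f y h k m)" for h k m
      using cont[of h k m] by (rule continuous_on_cong[THEN iffD1, rotated 2]) (auto simp: D3f)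
  qed
qed



lemma powr_3_2: "(x::real) \<ge> 0 \<Longrightarrow> x powr (3/2) = x * sqrt x"
proof -
  assume x: "x \<ge> 0"
  have "x powr (3/2) = x powr 1 * x powr (1/2)"
    using powr_add[of x 1 "1/2"] by simp
  also have "\<dots> = x * sqrt x" using x by (simp add: powr_half_sqrt)
  finally show ?thesis .
qed

lemma cube_le: "(A::real)^3 \<le> A^2 * sqrt (A^2)"
proof -
  have "A^3 \<le> \<bar>A\<bar>^3" by (metis abs_ge_self power_abs)
  also have "\<bar>A\<bar>^3 = A^2 * sqrt (A^2)" by (simp add: power2_eq_square power3_eq_cube)
  finally show ?thesis .
qed

lemma term_le: assumes "(r::real) = A^2" "r \<le> S" shows "A^3 \<le> r * sqrt S"
proof -
  have "A^3 \<le> r * sqrt r" using cube_le[of A] assms by simp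
  also have "\<dots> \<le> r * sqrt S" using assms real_le_rsqrt[of "\<bar>A\<bar>" S] by (intro mult_left_mono) auto
  finally show ?thesis .
qed

lemma T_bound:
  fixes h x l u :: "'i::finite \<Rightarrow> real"
  assumes "\<And>i. l i < x i" "\<And>i. x i < u i"
  defines "S \<equiv> (\<Sum>i\<in>UNIV. (h i)\<^sup>2 / (u i - x i)\<^sup>2 + (h i)\<^sup>2 / (x i - l i)\<^sup>2)"
  shows "(\<Sum>i\<in>UNIV. (h i)^3 / (u i - x i)^3 - (h i)^3 / (x i - l i)^3) \<le> S * sqrt S"
proof -
  have nn: "\<And>i. 0 \<le> (h i)\<^sup>2 / (u i - x i)\<^sup>2 + (h i)\<^sup>2 / (x i - l i)\<^sup>2" by simp
  have le: "(h i)\<^sup>2 / (u i - x i)\<^sup>2 + (h i)\<^sup>2 / (x i - l i)\<^sup>2 \<le> S" for i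
    unfolding S_def by (rule member_le_sum) (use nn in auto)
  have "(h i)^3 / (u i - x i)^3 - (h i)^3 / (x i - l i)^3 \<le>
        ((h i)\<^sup>2 / (u i - x i)\<^sup>2 + (h i)\<^sup>2 / (x i - l i)\<^sup>2) * sqrt S" for i
  proof -
    have r: "(h i)^3 / (u i - x i)^3 \<le> (h i)\<^sup>2 / (u i - x i)\<^sup>2 * sqrt S"
      using term_le[of "(h i)\<^sup>2 / (u i - x i)\<^sup>2" "h i / (u i - x i)" S] le[of i]
      by (simp add: power_divide) (smt (verit) divide_nonneg_nonneg zero_le_power2)
    have q: "- ((h i)^3 / (x i - l i)^3) \<le> (h i)\<^sup>2 / (x i - l i)\<^sup>2 * sqrt S"
      using term_le[of "(h i)\<^sup>2 / (x i - l i)\<^sup>2" "- h i / (x i - l i)" S] le[of i]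
      by (simp add: power_divide) (smt (verit) divide_nonneg_nonneg zero_le_power2)
    show ?thesis using r q by (simp add: algebra_simps)
  qed
  then have "(\<Sum>i\<in>UNIV. (h i)^3 / (u i - x i)^3 - (h i)^3 / (x i - l i)^3) \<le>
     (\<Sum>i\<in>UNIV. ((h i)\<^sup>2 / (u i - x i)\<^sup>2 + (h i)\<^sup>2 / (x i - l i)\<^sup>2) * sqrt S)"
    by (rule sum_mono)
  also have "\<dots> = S * sqrt S" unfolding S_def by (simp add: sum_distrib_right)
  finally show ?thesis .
qed

lemma core:
  fixes a d t \<beta> S T :: real
  assumes t: "t > 0" and b: "\<beta> > 0" and S: "S \<ge> 0"
    and d: "\<bar>d\<bar> \<le> \<beta> * a * sqrt S" and T: "T \<le> S * sqrt S"
  shows "d + 2 * t * T \<le> 2 * (1 + \<beta>) / sqrt t * (a + t * S) powr (3/2)"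
proof (cases "S = 0")
  case True
  then have "d = 0" "T \<le> 0" using d T by auto
  moreover have "0 \<le> 2 * (1 + \<beta>) / sqrt t * (a + t * S) powr (3/2)" using b t by simp
  moreover have "2 * t * T \<le> 0" using t \<open>T \<le> 0\<close> by (simp add: mult_nonneg_nonpos)
  ultimately show ?thesis by linarith
next
  case False
  then have Sp: "S > 0" using S by simp
  have a: "a \<ge> 0"
  proof (rule ccontr)
    assume "\<not> a \<ge> 0"
    then have "\<beta> * a * sqrt S < 0" using b Sp by (simp add: mult_pos_neg mult_neg_pos)
    then show False using d by simp
  qed
  define s where "s = sqrt S"
  define \<tau> where "\<tau> = sqrt t"
  have sp: "s > 0" using Sp s_def by simp
  have tp: "\<tau> > 0" using t \<tau>_def by simp
  have S_eq: "S = s^2" using S s_def by simp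
  have t_eq: "t = \<tau>^2" using t \<tau>_def by simp
  define c where "c = a + t * S"
  have c0: "c \<ge> 0" using a t S c_def by simp
  have sqb: "\<tau> * s \<le> sqrt c"
  proof -
    have "(\<tau> * s)^2 \<le> c" using a unfolding c_def S_eq t_eq by (simp add: power_mult_distrib)
    then show ?thesis using tp sp by (meson real_le_rsqrt)
  qed
  have lhs: "d + 2 * t * T \<le> \<beta> * a * s + 2 * t * S * s"
  proof -
    have "d \<le> \<beta> * a * s" using d s_def by simp
    moreover have "2 * t * T \<le> 2 * t * (S * s)" using T t s_def by simp
    ultimately show ?thesis by simp
  qed
  have "\<tau> * (\<beta> * a * s + 2 * t * S * s) = \<beta> * a * (\<tau> * s) + 2 * (t * S) * (\<tau> * s)"
    by (simp add: algebra_simps)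
  also have "\<dots> \<le> \<beta> * a * sqrt c + 2 * (t * S) * sqrt c"
    using sqb a b t S by (intro add_mono mult_left_mono) auto
  also have "\<dots> \<le> \<beta> * c * sqrt c + 2 * c * sqrt c"
    using a b t S c_def
    by (intro add_mono mult_right_mono mult_left_mono) auto
  also have "\<dots> \<le> 2 * (1 + \<beta>) * (c * sqrt c)"
    using b c0 by (simp add: algebra_simps)
  finally have "\<tau> * (\<beta> * a * s + 2 * t * S * s) \<le> 2 * (1 + \<beta>) * (c * sqrt c)" .
  then have "\<beta> * a * s + 2 * t * S * s \<le> 2 * (1 + \<beta>) / \<tau> * (c * sqrt c)"
    using tp by (simp add: field_simps)
  then show ?thesis using lhs powr_3_2[OF c0] unfolding c_def \<tau>_def by simp
qed



lemma bp0_convex: "a < b \<Longrightarrow> convex_on {a<..<b} (\<lambda>s. - bp0 a b s)"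
proof (rule f''_ge0_imp_convex[where f' = "\<lambda>s. - bp1 a b s" and f'' = "\<lambda>s. - bp2 a b s"])
  show "convex {a<..<b}" by simp
  show "((\<lambda>s. - bp0 a b s) has_real_derivative - bp1 a b x) (at x)" if "x \<in> {a<..<b}" for x
    using that by (auto intro!: DERIV_minus bp0_deriv)
  show "((\<lambda>s. - bp1 a b s) has_real_derivative - bp2 a b x) (at x)" if "x \<in> {a<..<b}" for x
    using that by (auto intro!: DERIV_minus bp1_deriv)
  show "0 \<le> - bp2 a b x" for x by (simp add: bp2_def)
qed

lemma F_convex:
  fixes l u :: "real ^ 'n" and \<psi> :: "real ^ 'n \<Rightarrow> real"
  assumes lu: "\<forall>i. l $ i < u $ i" and cvx: "convex_on (box l u) \<psi>" and t: "t \<ge> 0"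
  shows "convex_on (box l u) (\<lambda>x. \<psi> x - t * (\<Sum>i\<in>UNIV. bp0 (l$i) (u$i) (x$i)))"
proof (rule convex_onI)
  show "convex (box l u)" by simp
  fix \<tau> :: real and x y assume tau: "0 < \<tau>" "\<tau> < 1" and x: "x \<in> box l u" and y: "y \<in> box l u"
  have p: "\<psi> ((1 - \<tau>) *\<^sub>R x + \<tau> *\<^sub>R y) \<le> (1 - \<tau>) * \<psi> x + \<tau> * \<psi> y"
    using convex_onD[OF cvx] tau x y by simp
  have q: "- bp0 (l$i) (u$i) ((1 - \<tau>) * x$i + \<tau> * y$i) \<le> (1 - \<tau>) * (- bp0 (l$i) (u$i) (x$i)) + \<tau> * (- bp0 (l$i) (u$i) (y$i))" for i
  proof -
    have "x$i \<in> {l$i<..<u$i}" "y$i \<in> {l$i<..<u$i}" using x y by (auto simp: mem_box_cart)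
    then show ?thesis using convex_onD[OF bp0_convex[OF lu[rule_format, of i]], of \<tau> "x$i" "y$i"] tau
      by (simp add: algebra_simps)
  qed
  have "(\<Sum>i\<in>UNIV. - bp0 (l$i) (u$i) ((1 - \<tau>) * x$i + \<tau> * y$i)) \<le>
        (\<Sum>i\<in>UNIV. (1 - \<tau>) * (- bp0 (l$i) (u$i) (x$i)) + \<tau> * (- bp0 (l$i) (u$i) (y$i)))"
    by (rule sum_mono) (rule q)
  then have "- (\<Sum>i\<in>UNIV. bp0 (l$i) (u$i) ((1 - \<tau>) * x$i + \<tau> * y$i)) \<le>
        (1 - \<tau>) * (- (\<Sum>i\<in>UNIV. bp0 (l$i) (u$i) (x$i))) + \<tau> * (- (\<Sum>i\<in>UNIV. bp0 (l$i) (u$i) (y$i)))"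
    by (simp add: sum.distrib sum_distrib_left sum_negf sum_subtractf)
  then have "t * (- (\<Sum>i\<in>UNIV. bp0 (l$i) (u$i) ((1 - \<tau>) * x$i + \<tau> * y$i))) \<le>
        t * ((1 - \<tau>) * (- (\<Sum>i\<in>UNIV. bp0 (l$i) (u$i) (x$i))) + \<tau> * (- (\<Sum>i\<in>UNIV. bp0 (l$i) (u$i) (y$i))))"
    using t by (intro mult_left_mono)
  with p show "\<psi> ((1 - \<tau>) *\<^sub>R x + \<tau> *\<^sub>R y) - t * (\<Sum>i\<in>UNIV. bp0 (l$i) (u$i) (((1 - \<tau>) *\<^sub>R x + \<tau> *\<^sub>R y)$i))
    \<le> (1 - \<tau>) * (\<psi> x - t * (\<Sum>i\<in>UNIV. bp0 (l$i) (u$i) (x$i))) + \<tau> * (\<psi> y - t * (\<Sum>i\<in>UNIV. bp0 (l$i) (u$i) (y$i)))"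
    by (simp add: algebra_simps)
qed



lemma bp0_le: "a < s \<Longrightarrow> s < b \<Longrightarrow> bp0 a b s \<le> (b - a)^2"
proof -
  assume as: "a < s" "s < b"
  have pos: "(b - s) * (s - a) > 0" using as by simp
  have "bp0 a b s \<le> (b - s) * (s - a) - 1" unfolding bp0_def using ln_le_minus_one[OF pos] .
  also have "(b - s) * (s - a) \<le> (b - a) * (b - a)" using as by (intro mult_mono) auto
  finally show ?thesis by (simp add: power2_eq_square)
qed

lemma F_closed:
  fixes l u :: "real ^ 'n" and \<psi> :: "real ^ 'n \<Rightarrow> real"
  assumes lu: "\<forall>i. l $ i < u $ i" and cvx: "convex_on (box l u) \<psi>" and t: "t > 0"
  defines "F \<equiv> (\<lambda>x. \<psi> x - t * (\<Sum>i\<in>UNIV. bp0 (l$i) (u$i) (x$i)))"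
  shows "closed (epigraph (box l u) F)"
proof -
  let ?S = "box l u"
  have contF: "continuous_on ?S F"
    unfolding F_def by (rule convex_on_continuous[OF open_box F_convex[OF lu cvx]]) (use t in simp)
  have contp: "continuous_on ?S \<psi>" by (rule convex_on_continuous[OF open_box cvx])
  show ?thesis unfolding closed_sequential_limits
  proof (intro allI impI, elim conjE)
    fix s :: "nat \<Rightarrow> ((real^'n) \<times> real)" and a
    assume mem: "\<forall>n. s n \<in> epigraph ?S F" and lim: "s \<longlonglongrightarrow> a"
    define x where "x n = fst (s n)" for n
    define y where "y n = snd (s n)" for n
    have xl: "x \<longlonglongrightarrow> fst a" unfolding x_def using lim by (intro tendsto_intros)
    have yl: "y \<longlonglongrightarrow> snd a" unfolding y_def using lim by (intro tendsto_intros)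
    have xS: "x n \<in> ?S" and Fle: "F (x n) \<le> y n" for n
      using mem[rule_format, of n] by (auto simp: x_def y_def epigraph_def)
    show "a \<in> epigraph ?S F"
    proof (cases "fst a \<in> ?S")
      case True
      have "(\<lambda>n. F (x n)) \<longlonglongrightarrow> F (fst a)"
        by (rule continuous_on_tendsto_compose[OF contF xl True]) (use xS in simp)
      then have "F (fst a) \<le> snd a" using yl Fle by (intro LIMSEQ_le) auto
      then show ?thesis using True by (simp add: epigraph_def)
    next
      case False
      define z where "z = fst a"
      have zc: "z \<in> cbox l u"
        unfolding z_def
        by (rule closed_sequentially[OF closed_cbox _ xl]) (use xS box_subset_cbox in blast)
      obtain j where zj: "z $ j = l $ j \<or> z $ j = u $ j"
        using False zc unfolding z_def[symmetric] mem_box_cart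
        by (metis order_less_le)
      define c :: "real^'n" where "c = (1/2) *\<^sub>R (l + u)"
      have cS: "c \<in> ?S" using lu by (auto simp: c_def mem_box_cart)
      define p where "p n = (1 - 1/2) *\<^sub>R c + (1/2) *\<^sub>R x n" for n
      define pz where "pz = (1 - 1/2) *\<^sub>R c + (1/2::real) *\<^sub>R z"
      have pS: "p n \<in> ?S" for n
        unfolding p_def by (rule convexD[OF convex_box(2) cS xS]) auto
      have pzS: "pz \<in> ?S"
        unfolding pz_def c_def mem_box_cart
      proof (intro allI)
        fix i
        have "l$i < u$i" "l$i \<le> z$i" "z$i \<le> u$i" using lu zc by (auto simp: mem_box_cart)
        then show "l $ i < ((1 - 1/2) *\<^sub>R ((1/2) *\<^sub>R (l + u)) + (1/2) *\<^sub>R z) $ i \<and>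
            ((1 - 1/2) *\<^sub>R ((1/2) *\<^sub>R (l + u)) + (1/2::real) *\<^sub>R z) $ i < u $ i" by (simp add: field_simps)
      qed
      have pl: "p \<longlonglongrightarrow> pz" unfolding p_def pz_def z_def by (intro tendsto_intros xl)
      have "(\<lambda>n. \<psi> (p n)) \<longlonglongrightarrow> \<psi> pz"
        by (rule continuous_on_tendsto_compose[OF contp pl pzS]) (use pS in simp)
      then have ev1: "eventually (\<lambda>n. \<psi> (p n) > \<psi> pz - 1) sequentially"
        by (rule order_tendstoD) simp
      have pc: "\<psi> (p n) \<le> (1 - 1/2) * \<psi> c + (1/2) * \<psi> (x n)" for n
        unfolding p_def by (rule convex_onD[OF cvx]) (use cS xS in auto)
      define K where "K = 2 * \<psi> pz - 2 - \<psi> c"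
      have ev1': "eventually (\<lambda>n. \<psi> (x n) > K) sequentially"
        using ev1 proof eventually_elim
        case (elim n) then show ?case using pc[of n] by (simp add: K_def)
      qed
      have ev2: "eventually (\<lambda>n. y n < snd a + 1) sequentially"
        using yl by (rule order_tendstoD) simp
      define W where "W = (\<Sum>i\<in>UNIV. (u$i - l$i)^2)"
      have sumle: "(\<Sum>i\<in>UNIV. bp0 (l$i) (u$i) (x n$i)) \<le> bp0 (l$j) (u$j) (x n$j) + W" for n
      proof -
        define g where "g i = bp0 (l$i) (u$i) (x n$i) - (u$i - l$i)^2" for i
        have gn: "g i \<le> 0" for i
          unfolding g_def using bp0_le[of "l$i" "x n$i" "u$i"] xS[of n] by (auto simp: mem_box_cart)
        have "sum g UNIV = g j + sum g (UNIV - {j})" by (simp add: sum.remove)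
        also have "\<dots> \<le> g j" using gn by (simp add: sum_nonpos)
        finally have "sum g UNIV \<le> g j" .
        moreover have "sum g UNIV = (\<Sum>i\<in>UNIV. bp0 (l$i) (u$i) (x n$i)) - W"
          unfolding g_def W_def by (simp add: sum_subtractf)
        moreover have "g j \<le> bp0 (l$j) (u$j) (x n$j)" unfolding g_def by simp
        ultimately show ?thesis by linarith
      qed
      define G where "G n = (u$j - x n$j) * (x n$j - l$j)" for n
      have Gl: "G \<longlonglongrightarrow> (u$j - z$j) * (z$j - l$j)" unfolding G_def z_def by (intro tendsto_intros xl)
      moreover have "(u$j - z$j) * (z$j - l$j) = 0" using zj by auto
      ultimately have "G \<longlonglongrightarrow> 0" by simp
      moreover have "eventually (\<lambda>n. G n > 0) sequentially"
        using xS by (auto simp: G_def mem_box_cart)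
      ultimately have "filterlim G (at_right 0) sequentially" by (rule tendsto_imp_filterlim_at_right)
      then have "filterlim (\<lambda>n. ln (G n)) at_bot sequentially" by (rule filterlim_compose[OF ln_at_0])
      then have ev3: "eventually (\<lambda>n. ln (G n) \<le> (K - snd a - 1) / t - W) sequentially"
        unfolding filterlim_at_bot by blast
      have "eventually (\<lambda>n. False) sequentially"
        using ev1' ev2 ev3
      proof eventually_elim
        case (elim n)
        have b: "bp0 (l$j) (u$j) (x n$j) \<le> (K - snd a - 1) / t - W"
          using elim(3) by (simp add: G_def bp0_def)
        have "t * (\<Sum>i\<in>UNIV. bp0 (l$i) (u$i) (x n$i)) \<le> t * ((K - snd a - 1) / t)"
          using sumle[of n] b t by (intro mult_left_mono) auto
        also have "\<dots> = K - snd a - 1" using t by simp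
        finally have "F (x n) > snd a + 1 - 0" using elim(1) unfolding F_def by linarith
        then show False using elim(2) Fle[of n] by linarith
      qed
      then show ?thesis by simp
    qed
  qed
qed


theorem lemma1:
  fixes l u :: "real ^ 'n" and \<psi> :: "real ^ 'n \<Rightarrow> real" and \<beta> :: real
  assumes lu: "\<forall>i. l $ i < u $ i"
    and C3: "C3_on (box l u) \<psi>"
    and cvx: "convex_on (box l u) \<psi>"
    and beta: "\<beta> > 0"
    and bound: "\<forall>x\<in>box l u. \<forall>h.
        \<bar>D3 \<psi> x h h h\<bar> \<le> \<beta> * D2 \<psi> x h h *
          sqrt (\<Sum>i\<in>UNIV. (h $ i)\<^sup>2 / (u $ i - x $ i)\<^sup>2 + (h $ i)\<^sup>2 / (x $ i - l $ i)\<^sup>2)"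
  shows "\<forall>t>0. self_concordant (2 * (1 + \<beta>) / sqrt t) (box l u)
           (\<lambda>x. \<psi> x - t * (\<Sum>i\<in>UNIV. ln ((u $ i - x $ i) * (x $ i - l $ i))))"
proof (intro allI impI)
  fix t :: real assume t: "t > 0"
  define f where "f = (\<lambda>x. \<psi> x - t * (\<Sum>i\<in>UNIV. ln ((u $ i - x $ i) * (x $ i - l $ i))))"
  have f_eq: "f = (\<lambda>x. \<psi> x - t * (\<Sum>i\<in>UNIV. bp0 (l$i) (u$i) (x$i)))"
    by (simp add: f_def bp0_def)
  have "convex_on (box l u) f" unfolding f_eq by (rule F_convex[OF lu cvx]) (use t in simp)
  moreover have "closed (epigraph (box l u) f)" unfolding f_eq by (rule F_closed[OF lu cvx t])
  moreover have "C3_on (box l u) f" unfolding f_def by (rule derivs(1)[OF C3])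
  moreover have "D3 f x h h h \<le> 2 * (1 + \<beta>) / sqrt t * (D2 f x h h) powr (3/2)"
    if x: "x \<in> box l u" for x h
  proof -
    define S where "S = (\<Sum>i\<in>UNIV. (h $ i)\<^sup>2 / (u $ i - x $ i)\<^sup>2 + (h $ i)\<^sup>2 / (x $ i - l $ i)\<^sup>2)"
    define T where "T = (\<Sum>i\<in>UNIV. (h$i)^3 / (u$i - x$i)^3 - (h$i)^3 / (x$i - l$i)^3)"
    have xi: "l$i < x$i" "x$i < u$i" for i using x by (auto simp: mem_box_cart)
    have e2: "(h$i * h$i) * bp2 (l$i) (u$i) (x$i) = - ((h $ i)\<^sup>2 / (u $ i - x $ i)\<^sup>2 + (h $ i)\<^sup>2 / (x $ i - l $ i)\<^sup>2)" for i
      using xi[of i] by (simp add: bp2_def field_simps power2_eq_square)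
    have e3: "(h$i * h$i * h$i) * bp3 (l$i) (u$i) (x$i) = - 2 * ((h$i)^3 / (u$i - x$i)^3 - (h$i)^3 / (x$i - l$i)^3)" for i
      using xi[of i] by (simp add: bp3_def field_simps power3_eq_cube)
    have D2eq: "D2 f x h h = D2 \<psi> x h h + t * S"
      unfolding f_def derivs(2)[OF C3 x] e2 S_def sum_negf by simp
    have D3eq: "D3 f x h h h = D3 \<psi> x h h h + 2 * t * T"
      unfolding f_def derivs(3)[OF C3 x] e3 T_def sum_distrib_left[symmetric] by simp
    have S0: "S \<ge> 0" unfolding S_def by (intro sum_nonneg) simp
    have Tb: "T \<le> S * sqrt S"
      unfolding T_def S_def by (rule T_bound[where h="\<lambda>i. h$i" and x="\<lambda>i. x$i" and l="\<lambda>i. l$i" and u="\<lambda>i. u$i", simplified]) (use xi in auto)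
    have d: "\<bar>D3 \<psi> x h h h\<bar> \<le> \<beta> * D2 \<psi> x h h * sqrt S" using bound x S_def by auto
    show ?thesis unfolding D2eq D3eq by (rule core[OF t beta S0 d Tb])
  qed
  ultimately show "self_concordant (2 * (1 + \<beta>) / sqrt t) (box l u) f"
    unfolding self_concordant_def closed_convex_fun_def using beta t by auto
qed

end
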